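(* Let $x>3/4$ be a real number. Then there exists $J_0(x)$ such that for every integer $J\geq\max(3,J_0(x))$ and every $(\mathbf{m},\mathbf{n})=(m_1,\dots,m_J,n_1,\dots,n_J)\in[0,x]^{2J}$ satisfying $$\sum_im_i+\sum_jn_j=x,\qquad m_i\leq x/J\ \text{ for all } i,\qquad n_1\geq n_2\geq\cdots\geq n_J,$$ we have $\eta(\mathbf{m},\mathbf{n})\geq\min\bigl(\frac1{24},\frac{4x-3}{24}\bigr)$, where $$\eta(\mathbf{m},\mathbf{n})=\max\Bigl\{\max_\sigma\min\Bigl(\frac14,\frac\sigma2,\frac{x-\sigma}{2}-\frac14\Bigr),\ \frac18-\max\Bigl(0,\frac12\bigl(1-(n_1+n_2)\bigr)\Bigr)\Bigr\},$$ and $\sigma$ ranges over all sub-sums $\sigma=\sum_{i\in\mathcal{I}}m_i+\sum_{j\in\mathcal{J}}n_j$ for $\mathcal{I},\mathcal{J}$ arbitrary subsets of $\{1,\dots,J\}$. *)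

theory Defs
  imports "HOL-Analysis.Analysis"
begin

definition subsums :: "nat \<Rightarrow> (nat \<Rightarrow> real) \<Rightarrow> (nat \<Rightarrow> real) \<Rightarrow> real set" where
  "subsums J m n = {(\<Sum>i\<in>I. m i) + (\<Sum>j\<in>K. n j) | I K. I \<subseteq> {1..J} \<and> K \<subseteq> {1..J}}"

definition eta :: "real \<Rightarrow> nat \<Rightarrow> (nat \<Rightarrow> real) \<Rightarrow> (nat \<Rightarrow> real) \<Rightarrow> real" where
  "eta x J m n = max
     (Max ((\<lambda>\<sigma>. min (1/4) (min (\<sigma>/2) ((x - \<sigma>)/2 - 1/4))) ` subsums J m n))
     (1/8 - max 0 ((1 - (n 1 + n 2)) / 2))"

end

theory Submission
  imports Defs
begin

lemma walk1:
  fixes f :: "'a \<Rightarrow> real"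
  assumes "finite A" "\<forall>a\<in>A. f a \<le> w" "w \<le> U - L"
  shows "\<forall>B. B \<le> U \<longrightarrow> L \<le> B + sum f A \<longrightarrow> (\<exists>S\<subseteq>A. L \<le> B + sum f S \<and> B + sum f S \<le> U)"
  using assms
proof (induction A rule: finite_induct)
  case empty
  then show ?case by auto
next
  case (insert a A)
  show ?case
  proof (intro allI impI)
    fix B assume B: "B \<le> U" "L \<le> B + sum f (insert a A)"
    show "\<exists>S\<subseteq>insert a A. L \<le> B + sum f S \<and> B + sum f S \<le> U"
    proof (cases "L \<le> B")
      case True then show ?thesis using B by (intro exI[of _ "{}"]) auto
    next
      case False
      have "f a \<le> w" using insert by auto
      hence "B + f a \<le> U" using False insert.prems by linarith
      moreover have "L \<le> (B + f a) + sum f A" using B insert.hyps by simp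
      ultimately obtain S where S: "S \<subseteq> A" "L \<le> (B + f a) + sum f S" "(B + f a) + sum f S \<le> U"
        using insert.IH insert.prems by auto
      have "a \<notin> S" using S insert.hyps by auto
      hence "sum f (insert a S) = f a + sum f S" using S insert.hyps finite_subset[OF S(1) insert.hyps(1)] by simp
      then show ?thesis using S by (intro exI[of _ "insert a S"]) auto
    qed
  qed
qed

lemma walk2:
  fixes m n :: "nat \<Rightarrow> real"
  assumes "finite A" "finite K0" "\<forall>a\<in>A. m a \<le> w" "\<forall>a\<in>K0. n a \<le> w" "w \<le> U - L"
  shows "\<forall>B. B \<le> U \<longrightarrow> L \<le> B + sum m A + sum n K0 \<longrightarrow>
     (\<exists>I\<subseteq>A. \<exists>K\<subseteq>K0. L \<le> B + sum m I + sum n K \<and> B + sum m I + sum n K \<le> U)"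
  using assms
proof (induction A rule: finite_induct)
  case empty
  show ?case
  proof (intro allI impI)
    fix B assume "B \<le> U" "L \<le> B + sum m {} + sum n K0"
    then obtain S where "S \<subseteq> K0" "L \<le> B + sum n S \<and> B + sum n S \<le> U"
      using walk1[of K0 n w U L] empty.prems by auto
    then show "\<exists>I\<subseteq>{}. \<exists>K\<subseteq>K0. L \<le> B + sum m I + sum n K \<and> B + sum m I + sum n K \<le> U"
      by (intro exI[of _ "{}"]) auto
  qed
next
  case (insert a A)
  show ?case
  proof (intro allI impI)
    fix B assume B: "B \<le> U" "L \<le> B + sum m (insert a A) + sum n K0"
    show "\<exists>I\<subseteq>insert a A. \<exists>K\<subseteq>K0. L \<le> B + sum m I + sum n K \<and> B + sum m I + sum n K \<le> U"
    proof (cases "L \<le> B")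
      case True then show ?thesis using B by (intro exI[of _ "{}"]) auto
    next
      case False
      have "m a \<le> w" using insert by auto
      hence "B + m a \<le> U" using False insert.prems by linarith
      moreover have "L \<le> (B + m a) + sum m A + sum n K0" using B insert.hyps by simp
      ultimately obtain I K where S: "I \<subseteq> A" "K \<subseteq> K0" "L \<le> (B + m a) + sum m I + sum n K"
         "(B + m a) + sum m I + sum n K \<le> U"
        using insert.IH insert.prems by blast
      have "a \<notin> I" using S insert.hyps by auto
      hence "sum m (insert a I) = m a + sum m I" using S insert.hyps finite_subset[OF S(1) insert.hyps(1)] by simp
      then show ?thesis using S by (intro exI[of _ "insert a I"] exI[of _ K]) auto
    qed
  qed
qed

lemma subsums_finite: "finite (subsums J m n)"
proof -
  have "subsums J m n = (\<lambda>(I,K). sum m I + sum n K) ` (Pow {1..J} \<times> Pow {1..J})"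
    unfolding subsums_def by auto
  thus ?thesis by simp
qed

theorem proposition4p4:
  fixes x :: real
  assumes "x > 3/4"
  shows "\<exists>J0::nat. \<forall>J::nat. \<forall>m n :: nat \<Rightarrow> real.
           J \<ge> max 3 J0 \<longrightarrow>
           (\<forall>i\<in>{1..J}. 0 \<le> m i \<and> m i \<le> x \<and> 0 \<le> n i \<and> n i \<le> x) \<longrightarrow>
           (\<Sum>i=1..J. m i) + (\<Sum>j=1..J. n j) = x \<longrightarrow>
           (\<forall>i\<in>{1..J}. m i \<le> x / real J) \<longrightarrow>
           (\<forall>i j. 1 \<le> i \<longrightarrow> i \<le> j \<longrightarrow> j \<le> J \<longrightarrow> n j \<le> n i) \<longrightarrow>
           eta x J m n \<ge> min (1/24) ((4*x - 3)/24)"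
proof (intro exI[of _ 0] allI impI)
  fix J :: nat and m n :: "nat \<Rightarrow> real"
  assume J3: "max 3 0 \<le> J"
    and bnd: "\<forall>i\<in>{1..J}. 0 \<le> m i \<and> m i \<le> x \<and> 0 \<le> n i \<and> n i \<le> x"
    and tot: "(\<Sum>i=1..J. m i) + (\<Sum>j=1..J. n j) = x"
    and msmall: "\<forall>i\<in>{1..J}. m i \<le> x / real J"
    and mono: "\<forall>i j. 1 \<le> i \<longrightarrow> i \<le> j \<longrightarrow> j \<le> J \<longrightarrow> n j \<le> n i"
  define c where "c = min (1/24) ((4*x - 3)/24)"
  define L where "L = 2*c"
  define U where "U = x - 1/2 - 2*c"
  define w where "w = U - L"
  have J3': "J \<ge> 3" using J3 by simp
  have c1: "c \<le> 1/24" "c \<le> (4*x-3)/24" "c > 0" using assms unfolding c_def by (auto simp: min_def)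
  have c4: "6*c \<le> x - 3/4" using c1(2) by (simp add: field_simps)
  have wx: "w \<ge> x/3" using c1(2) unfolding w_def U_def L_def by (simp add: field_simps)
  have x0: "x > 0" using assms by simp
  have "x / real J \<le> x / 3" using J3' x0 by (intro divide_left_mono) auto
  hence mw: "\<forall>i\<in>{1..J}. m i \<le> w" using msmall wx by (meson order_trans)
  have splitN: "(\<Sum>j=1..J. n j) = n 1 + n 2 + (\<Sum>j=3..J. n j)"
  proof -
    have "{1..J} = {1,2} \<union> {3..J}" using J3' by auto
    hence "(\<Sum>j=1..J. n j) = sum n {1,2} + sum n {3..J}" by (simp add: sum.union_disjoint)
    thus ?thesis by simp
  qed
  have Mnn: "(\<Sum>i=1..J. m i) \<ge> 0" using bnd by (intro sum_nonneg) auto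
  have nw: "\<forall>j\<in>{3..J}. n j \<le> w"
  proof
    fix j assume j: "j \<in> {3..J}"
    have "sum n {j} \<le> sum n {3..J}" using j bnd by (intro sum_mono2) auto
    hence "n j \<le> (\<Sum>j=3..J. n j)" by simp
    moreover have "n j \<le> n 1" "n j \<le> n 2" using mono j by auto
    ultimately have "3 * n j \<le> x" using tot splitN Mnn by linarith
    thus "n j \<le> w" using wx by linarith
  qed
  show "eta x J m n \<ge> min (1/24) ((4*x - 3)/24)"
  proof (cases "L \<le> (\<Sum>i=1..J. m i) + (\<Sum>j=3..J. n j)")
    case True
    have "0 \<le> U" unfolding U_def using c1 assms by linarith
    have W: "\<forall>B. B \<le> U \<longrightarrow> L \<le> B + sum m {1..J} + sum n {3..J} \<longrightarrow>
     (\<exists>I\<subseteq>{1..J}. \<exists>K\<subseteq>{3..J}. L \<le> B + sum m I + sum n K \<and> B + sum m I + sum n K \<le> U)"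
      by (rule walk2) (use mw nw in \<open>auto simp: w_def\<close>)
    have "L \<le> 0 + sum m {1..J} + sum n {3..J}" using True by simp
    then obtain I K where IK: "I \<subseteq> {1..J}" "K \<subseteq> {3..J}"
      "L \<le> 0 + sum m I + sum n K" "0 + sum m I + sum n K \<le> U"
      using W \<open>0 \<le> U\<close> by blast
    define s where "s = sum m I + sum n K"
    have "s \<in> subsums J m n" unfolding subsums_def s_def using IK by (intro CollectI exI[of _ I] exI[of _ K]) auto
    hence "min (1/4) (min (s/2) ((x - s)/2 - 1/4)) \<le>
        Max ((\<lambda>\<sigma>. min (1/4) (min (\<sigma>/2) ((x - \<sigma>)/2 - 1/4))) ` subsums J m n)"
      using subsums_finite by (intro Max_ge) auto
    moreover have "c \<le> min (1/4) (min (s/2) ((x - s)/2 - 1/4))"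
    proof -
      have "c \<le> s/2" "c \<le> (x - s)/2 - 1/4" using IK(3,4) s_def unfolding L_def U_def by (simp_all add: field_simps)
      thus ?thesis using c1 by simp
    qed
    ultimately show ?thesis unfolding eta_def c_def[symmetric] by linarith
  next
    case False
    hence "n 1 + n 2 \<ge> 3/4 + 2*c" using tot splitN c4 c1(3) unfolding L_def by linarith
    hence "c \<le> 1/8 - max 0 ((1 - (n 1 + n 2)) / 2)" using c1 by (simp add: max_def field_simps)
    thus ?thesis unfolding eta_def c_def[symmetric] by linarith
  qed
qed

end
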